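(* Let $\beta<1$ be real and $\alpha=1$. Then the $\beta$-Ces\`aro operator $C_\beta$ maps $\mathcal{B}_1^0$ into $\mathcal{B}_1^0$ and is a bounded linear operator from $(\mathcal{B}_1^0,\|\cdot\|_{\mathcal{B}_1})$ to itself.
   Context: $\mathbb{D}=\{z\in\mathbb{C}:|z|<1\}$. For $\alpha>0$, the $\alpha$-Bloch space $\mathcal{B}_\alpha$ is the space of analytic functions $f$ on $\mathbb{D}$ with $\|f\|_{\mathcal{B}_\alpha}:=\sup_{z\in\mathbb{D}}(1-|z|^2)^\alpha|f'(z)|<\infty$. $\mathcal{B}_\alpha^0=\{f\in\mathcal{B}_\alpha: f(0)=0\}$, normed by $\|\cdot\|_{\mathcal{B}_\alpha}$. For $\beta\in\mathbb{R}$, the $\beta$-Ces\`aro operator is $C_\beta(f)(z)=\int_0^z \frac{f(w)}{w(1-w)^\beta}\,dw$ for analytic $f$ on $\mathbb{D}$ with $f(0)=0$, where $(1-w)^{\beta}$ is defined by the principal branch. *)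

theory Defs
  imports "HOL-Complex_Analysis.Complex_Analysis"
begin

definition bloch_set :: "real \<Rightarrow> (complex \<Rightarrow> complex) \<Rightarrow> real set" where
  "bloch_set \<alpha> f = {(1 - (cmod z)^2) powr \<alpha> * cmod (deriv f z) | z. z \<in> ball 0 1}"

definition bloch_space :: "real \<Rightarrow> (complex \<Rightarrow> complex) set" where
  "bloch_space \<alpha> = {f. f holomorphic_on ball 0 1 \<and> bdd_above (bloch_set \<alpha> f)}"

definition bloch_norm :: "real \<Rightarrow> (complex \<Rightarrow> complex) \<Rightarrow> real" where
  "bloch_norm \<alpha> f = Sup (bloch_set \<alpha> f)"

definition bloch0 :: "real \<Rightarrow> (complex \<Rightarrow> complex) set" where
  "bloch0 \<alpha> = {f \<in> bloch_space \<alpha>. f 0 = 0}"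

text \<open>beta-Cesaro operator: integral along the segment [0,z]; (1-w) powr beta is the
  principal branch (Re(1-w) > 0 on the disc). The value of the integrand at the single
  point w = 0 is irrelevant for the integral.\<close>
definition cesaro :: "real \<Rightarrow> (complex \<Rightarrow> complex) \<Rightarrow> complex \<Rightarrow> complex" where
  "cesaro \<beta> f z = contour_integral (linepath 0 z)
      (\<lambda>w. f w / (w * (1 - w) powr (complex_of_real \<beta>)))"

end

theory Submission
  imports Defs
begin


definition cg :: "real \<Rightarrow> (complex \<Rightarrow> complex) \<Rightarrow> complex \<Rightarrow> complex" where
  "cg \<beta> f w = (if w = 0 then deriv f 0 else f w / w) / (1 - w) powr (complex_of_real \<beta>)"

lemma one_minus_notin': "cmod (w::complex) < 1 \<Longrightarrow> 1 - w \<notin> \<real>\<^sub>\<le>\<^sub>0"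
proof
  assume "cmod w < 1" "1 - w \<in> \<real>\<^sub>\<le>\<^sub>0"
  then have "Re (1 - w) \<le> 0" "cmod w < 1" by (auto simp: complex_nonpos_Reals_iff)
  moreover have "Re w \<le> cmod w" by (rule complex_Re_le_cmod)
  ultimately show False by simp
qed

lemma one_minus_notin: "w \<in> ball (0::complex) 1 \<Longrightarrow> 1 - w \<notin> \<real>\<^sub>\<le>\<^sub>0"
  using one_minus_notin' by simp

lemma cg_holo:
  assumes "f holomorphic_on ball 0 1" "f 0 = 0"
  shows "cg \<beta> f holomorphic_on ball 0 1"
proof -
  have "(\<lambda>z. if z = 0 then deriv f 0 else (f z - f 0) / (z - 0)) holomorphic_on ball 0 1"
    by (rule pole_lemma_open) (use assms in auto)
  moreover have "(\<lambda>z. if z = 0 then deriv f 0 else (f z - f 0) / (z - 0)) = (\<lambda>z. if z = 0 then deriv f 0 else f z / z)"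
    using assms(2) by (intro ext) simp
  ultimately have h1: "(\<lambda>z. if z = 0 then deriv f 0 else f z / z) holomorphic_on ball 0 1"
    by simp
  have h2: "(\<lambda>w. (1 - w) powr (complex_of_real \<beta>)) holomorphic_on ball 0 1"
    by (intro holomorphic_intros) (auto dest: one_minus_notin')
  have "(\<lambda>w. (if w = 0 then deriv f 0 else f w / w) / (1 - w) powr (complex_of_real \<beta>)) holomorphic_on ball 0 1"
  proof (intro holomorphic_on_divide h1 h2)
    fix w :: complex assume "w \<in> ball 0 1"
    then have "1 - w \<noteq> 0" using one_minus_notin by fastforce
    then show "(1 - w) powr (complex_of_real \<beta>) \<noteq> 0" by (simp add: powr_def)
  qed
  then show ?thesis unfolding cg_def[abs_def] .
qed

lemma cesaro_props:
  assumes "f holomorphic_on ball 0 1" "f 0 = 0" "z \<in> ball 0 1"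
  shows "((\<lambda>w. f w / (w * (1 - w) powr (complex_of_real \<beta>))) has_contour_integral cesaro \<beta> f z) (linepath 0 z)"
    and "(cesaro \<beta> f has_field_derivative cg \<beta> f z) (at z)"
proof -
  obtain G where G: "\<And>x. x \<in> ball 0 1 \<Longrightarrow> (G has_field_derivative cg \<beta> f x) (at x within ball 0 1)"
    using holomorphic_convex_primitive'[OF convex_ball open_ball cg_holo[OF assms(1,2)]] by blast
  have G': "(G has_field_derivative cg \<beta> f x) (at x)" if "x \<in> ball 0 1" for x
    using G[OF that] by (simp only: at_within_open[OF that open_ball])
  have ci: "(cg \<beta> f has_contour_integral G w - G 0) (linepath 0 w)" if "w \<in> ball 0 1" for w
  proof -
    have "path_image (linepath 0 w) \<subseteq> ball 0 1"
      using that convex_contains_segment[of "ball (0::complex) 1"] convex_ball[of "0::complex" 1]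
      unfolding path_image_linepath by (meson centre_in_ball zero_less_one)
    from contour_integral_primitive[OF G _ this] show ?thesis by simp
  qed
  have ci2: "((\<lambda>w. f w / (w * (1 - w) powr (complex_of_real \<beta>))) has_contour_integral G w - G 0) (linepath 0 w)"
    if "w \<in> ball 0 1" for w
  proof -
    have X: "((\<lambda>t. cg \<beta> f (linepath 0 w t) * (w - 0)) has_integral G w - G 0) {0..1}"
      using ci[OF that] by (simp only: has_contour_integral_linepath)
    have "((\<lambda>t. f (linepath 0 w t) / (linepath 0 w t * (1 - linepath 0 w t) powr (complex_of_real \<beta>)) * (w - 0)) has_integral G w - G 0) {0..1}"
    proof (rule has_integral_spike_finite[where S="{0}", OF _ _ X])
      fix t :: real assume t: "t \<in> {0..1} - {0}"
      show "f (linepath 0 w t) / (linepath 0 w t * (1 - linepath 0 w t) powr (complex_of_real \<beta>)) * (w - 0) =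
         cg \<beta> f (linepath 0 w t) * (w - 0)"
      proof (cases "w = 0")
        case True then show ?thesis by simp
      next
        case False
        with t have "linepath 0 w t \<noteq> 0" by (simp add: linepath_def)
        then show ?thesis by (simp add: cg_def)
      qed
    qed simp
    then show ?thesis by (simp only: has_contour_integral_linepath)
  qed
  have ces: "cesaro \<beta> f w = G w - G 0" if "w \<in> ball 0 1" for w
    unfolding cesaro_def using ci2[OF that] by (rule contour_integral_unique)
  show "((\<lambda>w. f w / (w * (1 - w) powr (complex_of_real \<beta>))) has_contour_integral cesaro \<beta> f z) (linepath 0 z)"
    using ci2[OF assms(3)] ces[OF assms(3)] by simp
  have "((\<lambda>w. G w - G 0) has_field_derivative cg \<beta> f z) (at z)"
    using G'[OF assms(3)] by (auto intro!: derivative_eq_intros)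
  then show "(cesaro \<beta> f has_field_derivative cg \<beta> f z) (at z)"
    by (rule has_field_derivative_transform_within_open[OF _ open_ball assms(3)]) (simp add: ces)
qed

lemma cesaro_0: "cesaro \<beta> f 0 = 0"
  unfolding cesaro_def by simp


lemma small_bound:
  assumes hol: "f holomorphic_on ball 0 1" and f0: "f 0 = 0" and M: "0 \<le> M"
    and bnd: "\<And>w. w \<in> ball 0 1 \<Longrightarrow> (1 - (cmod w)^2) * cmod (deriv f w) \<le> M"
    and z: "cmod z \<le> 1/2"
  shows "cmod (if z = 0 then deriv f 0 else f z / z) \<le> 4/3 * M"
proof (cases "z = 0")
  case True
  then show ?thesis using bnd[of 0] M by simp
next
  case False
  have sub: "cball 0 (1/2) \<subseteq> ball (0::complex) 1" by auto
  have df: "(f has_field_derivative deriv f w) (at w within cball 0 (1/2))" if "w \<in> cball 0 (1/2)" for w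
    using holomorphic_derivI[OF hol open_ball, of w] sub that
    by (auto intro: has_field_derivative_at_within)
  have dn: "cmod (deriv f w) \<le> 4/3 * M" if "w \<in> cball 0 (1/2)" for w
  proof -
    have w1: "cmod w \<le> 1/2" using that by simp
    have "(cmod w)^2 \<le> (1/2)^2" by (rule power_mono[OF w1 norm_ge_zero])
    then have "3/4 \<le> 1 - (cmod w)^2" by (simp add: power_divide)
    then have "3/4 * cmod (deriv f w) \<le> (1 - (cmod w)^2) * cmod (deriv f w)"
      by (rule mult_right_mono) simp
    also have "\<dots> \<le> M" using bnd[of w] sub that by auto
    finally show ?thesis by linarith
  qed
  have "cmod (f z - f 0) \<le> 4/3 * M * cmod (z - 0)"
    by (rule field_differentiable_bound[OF convex_cball df dn]) (use z in auto)
  then have "cmod (f z) \<le> 4/3 * M * cmod z" using f0 by simp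
  moreover have "cmod (f z / z) = cmod (f z) / cmod z" by (simp add: norm_divide)
  ultimately have "cmod (f z / z) \<le> 4/3 * M"
    using False by (simp add: pos_divide_le_eq)
  then show ?thesis using False by simp
qed



lemma large_bound:
  assumes hol: "f holomorphic_on ball 0 1" and f0: "f 0 = 0" and M: "0 \<le> M"
    and bnd: "\<And>w. w \<in> ball 0 1 \<Longrightarrow> (1 - (cmod w)^2) * cmod (deriv f w) \<le> M"
    and g: "0 \<le> \<gamma>" "\<gamma> < 1"
    and z: "cmod z < 1" "0 < cmod z"
  shows "cmod (f z) \<le> M / (1 - \<gamma>) * (1 - cmod z) powr (\<gamma> - 1)"
proof -
  define r where "r = cmod z"
  define e where "e = z / of_real r"
  have r: "0 < r" "r < 1" using z by (auto simp: r_def)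
  have e1: "cmod e = 1" using r by (simp add: e_def norm_divide r_def)
  have ez: "of_real r * e = z" using r by (simp add: e_def)
  define \<phi> where "\<phi> t = f (of_real t * e)" for t :: real
  define \<psi> where "\<psi> t = M / (1 - \<gamma>) * (1 - t) powr (\<gamma> - 1)" for t :: real
  have inball: "of_real t * e \<in> ball 0 1" if "0 \<le> t" "t \<le> r" for t
    using that r e1 by (simp add: norm_mult)
  have contf: "continuous_on (ball 0 1) f"
    using hol holomorphic_on_imp_continuous_on by blast
  have c1: "continuous_on {0..r} \<phi>"
    unfolding \<phi>_def
    by (rule continuous_on_compose2[OF contf]) (auto intro!: continuous_intros inball)
  have c2: "continuous_on {0..r} \<psi>"
    unfolding \<psi>_def using r g by (auto intro!: continuous_intros)
  have d1: "(\<phi> has_vector_derivative e * deriv f (of_real t * e)) (at t)" if "0 < t" "t < r" for t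
  proof -
    have "((\<lambda>t. of_real t * e) has_vector_derivative e) (at t)"
      by (auto intro!: derivative_eq_intros simp: has_vector_derivative_def scaleR_conv_of_real)
    from field_vector_diff_chain_at[OF this holomorphic_derivI[OF hol open_ball inball]]
    show ?thesis using that unfolding \<phi>_def by (simp add: o_def)
  qed
  have d2: "(\<psi> has_vector_derivative M * (1 - t) powr (\<gamma> - 2)) (at t)" if "0 < t" "t < r" for t
  proof -
    have "(\<psi> has_real_derivative M / (1 - \<gamma>) * ((\<gamma> - 1) * (1 - t) powr (\<gamma> - 1 - 1) * (0 - 1))) (at t)"
      unfolding \<psi>_def using that r g by (auto intro!: derivative_eq_intros)
    moreover have "M / (1 - \<gamma>) * ((\<gamma> - 1) * (1 - t) powr (\<gamma> - 1 - 1) * (0 - 1)) = M * (1 - t) powr (\<gamma> - 2)"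
      using g by (simp add: field_simps)
    ultimately show ?thesis by (simp add: has_real_derivative_iff_has_vector_derivative)
  qed
  have bd: "norm (e * deriv f (of_real t * e)) \<le> M * (1 - t) powr (\<gamma> - 2)" if "0 < t" "t < r" for t
  proof -
    have t1: "0 < 1 - t" "1 - t \<le> 1" using that r by auto
    have "(1 - t^2) * cmod (deriv f (of_real t * e)) \<le> M"
      using bnd[OF inball[of t]] that e1 by (simp add: norm_mult)
    moreover have "1 - t \<le> 1 - t^2" using that r by (simp add: power2_eq_square mult_le_cancel_right1 )
    ultimately have "(1 - t) * cmod (deriv f (of_real t * e)) \<le> M"
      by (meson mult_right_mono norm_ge_zero order_trans)
    then have "cmod (deriv f (of_real t * e)) \<le> M * (1 - t) powr (-1)"
      using t1 by (simp add: powr_minus field_simps)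
    also have "\<dots> \<le> M * (1 - t) powr (\<gamma> - 2)"
      using t1 g M by (intro mult_left_mono powr_mono') auto
    finally show ?thesis using e1 by (simp add: norm_mult)
  qed
  have "norm (\<phi> r - \<phi> 0) \<le> \<psi> r - \<psi> 0"
    by (rule differentiable_bound_general[OF r(1) c1 c2 d1 d2 bd])
  moreover have "\<phi> r = f z" "\<phi> 0 = 0" using ez f0 by (auto simp: \<phi>_def)
  moreover have "\<psi> 0 \<ge> 0" using g M by (simp add: \<psi>_def)
  ultimately show ?thesis by (simp add: \<psi>_def r_def)
qed


lemma key_bound:
  assumes hol: "f holomorphic_on ball 0 1" and f0: "f 0 = 0" and M: "0 \<le> M"
    and bnd: "\<And>w. w \<in> ball 0 1 \<Longrightarrow> (1 - (cmod w)^2) * cmod (deriv f w) \<le> M"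
    and g: "0 \<le> \<gamma>" "\<gamma> < 1"
    and z: "cmod z < 1"
  shows "(1 - (cmod z)^2) * cmod (if z = 0 then deriv f 0 else f z / z) \<le> 4 / (1 - \<gamma>) * M * (1 - cmod z) powr \<gamma>"
proof (cases "cmod z \<le> 1/2")
  case True
  have A: "cmod (if z = 0 then deriv f 0 else f z / z) \<le> 4/3 * M"
    by (rule small_bound[OF hol f0 M bnd True])
  have r2: "0 \<le> 1 - (cmod z)^2" "1 - (cmod z)^2 \<le> 1" using z
    by (auto simp: abs_square_le_1)
  have "(1 - (cmod z)^2) * cmod (if z = 0 then deriv f 0 else f z / z) \<le> 1 * (4/3 * M)"
    using A r2 by (intro mult_mono) auto
  also have "\<dots> \<le> 4 * M * (1/2)" using M by simp
  also have "\<dots> \<le> 4 / (1 - \<gamma>) * M * (1 - cmod z) powr \<gamma>"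
  proof (rule mult_mono)
    show "4 * M \<le> 4 / (1 - \<gamma>) * M"
      using g M by (intro mult_right_mono) (auto simp: field_simps)
    have "(1 - cmod z) powr 1 \<le> (1 - cmod z) powr \<gamma>"
      using g z by (intro powr_mono') auto
    then show "1/2 \<le> (1 - cmod z) powr \<gamma>" using True z by simp
  qed (use g M in auto)
  finally show ?thesis .
next
  case False
  define r where "r = cmod z"
  have r: "1/2 < r" "r < 1" using False z by (auto simp: r_def)
  have zn: "z \<noteq> 0" using r r_def by auto
  have F: "cmod (f z) \<le> M / (1 - \<gamma>) * (1 - r) powr (\<gamma> - 1)"
    unfolding r_def by (rule large_bound[OF hol f0 M bnd g z]) (use r r_def in auto)
  have "(1 - (cmod z)^2) * cmod (if z = 0 then deriv f 0 else f z / z) = ((1 - r^2) / r) * cmod (f z)"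
    using zn by (simp add: r_def norm_divide)
  also have "\<dots> \<le> (4 * (1 - r)) * (M / (1 - \<gamma>) * (1 - r) powr (\<gamma> - 1))"
  proof (intro mult_mono F)
    have "1 - r^2 = (1 - r) * (1 + r)" by (simp add: power2_eq_square algebra_simps)
    also have "\<dots> \<le> (1 - r) * (4 * r)" using r by (intro mult_left_mono) auto
    finally have "1 - r^2 \<le> 4 * (1 - r) * r" by (simp add: algebra_simps)
    then show "(1 - r^2) / r \<le> 4 * (1 - r)" using r by (simp add: pos_divide_le_eq)
  qed (use r in auto)
  also have "\<dots> = 4 / (1 - \<gamma>) * M * ((1 - r) powr (\<gamma> - 1) * (1 - r))"
    by (simp add: divide_inverse mult_ac)
  also have "(1 - r) powr (\<gamma> - 1) * (1 - r) = (1 - r) powr \<gamma>"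
    using r powr_add[of "1-r" "\<gamma>-1" 1] by simp
  finally show ?thesis by (simp add: r_def)
qed

definition Cst :: "real \<Rightarrow> real" where
  "Cst \<beta> = 4 / (1 - max \<beta> 0) * (1 + 2 powr (-\<beta>))"

lemma cg_bound:
  assumes hol: "f holomorphic_on ball 0 1" and f0: "f 0 = 0" and M: "0 \<le> M"
    and bnd: "\<And>w. w \<in> ball 0 1 \<Longrightarrow> (1 - (cmod w)^2) * cmod (deriv f w) \<le> M"
    and b: "\<beta> < 1" and z: "cmod z < 1"
  shows "(1 - (cmod z)^2) * cmod (cg \<beta> f z) \<le> Cst \<beta> * M"
proof -
  define G where "G = cmod (if z = 0 then deriv f 0 else f z / z)"
  define r where "r = cmod z"
  have r: "0 \<le> r" "r < 1" using z by (auto simp: r_def)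
  have r2: "0 \<le> 1 - r^2" using r by (simp add: abs_square_le_1)
  have Gn: "0 \<le> G" by (simp add: G_def)
  have n1: "1 - r \<le> cmod (1 - z)"
    using norm_triangle_ineq2[of 1 z] by (simp add: r_def)
  have n2: "cmod (1 - z) \<le> 2"
    using norm_triangle_ineq4[of 1 z] r by (simp add: r_def)
  have pos: "0 < cmod (1 - z)" using n1 r by linarith
  have eq: "cmod (cg \<beta> f z) = G / cmod (1 - z) powr \<beta>"
    by (simp add: cg_def G_def norm_divide norm_powr_real_powr')
  have Cge: "4 / (1 - max \<beta> 0) \<le> Cst \<beta>"
  proof -
    have "0 \<le> 4 / (1 - max \<beta> 0)" using b by simp
    from mult_left_mono[of 1 "1 + 2 powr (-\<beta>)", OF _ this]
    show ?thesis by (simp add: Cst_def)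
  qed
  have Cge2: "4 * 2 powr (-\<beta>) \<le> Cst \<beta>" if "\<beta> \<le> 0"
    using that by (simp add: Cst_def)
  show ?thesis
  proof (cases "\<beta> > 0")
    case True
    have K: "(1 - r^2) * G \<le> 4 / (1 - \<beta>) * M * (1 - r) powr \<beta>"
      using key_bound[OF hol f0 M bnd _ b z] True unfolding G_def r_def by auto
    have "(1 - r^2) * cmod (cg \<beta> f z) = (1 - r^2) * G / cmod (1 - z) powr \<beta>"
      by (simp add: eq)
    also have "\<dots> \<le> 4 / (1 - \<beta>) * M * (1 - r) powr \<beta> / cmod (1 - z) powr \<beta>"
      using K pos by (intro divide_right_mono) auto
    also have "\<dots> \<le> 4 / (1 - \<beta>) * M * 1"
    proof -
      have "(1 - r) powr \<beta> \<le> cmod (1 - z) powr \<beta>"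
        using True r n1 by (intro powr_mono2) auto
      then have "(1 - r) powr \<beta> / cmod (1 - z) powr \<beta> \<le> 1"
        using pos by (simp add: divide_le_eq)
      then show ?thesis using M b
        by (metis (no_types, opaque_lifting) diff_gt_0_iff_gt divide_nonneg_nonneg mult_left_mono
            times_divide_eq_right zero_le_numeral mult_nonneg_nonneg less_eq_real_def)
    qed
    also have "\<dots> \<le> Cst \<beta> * M"
      using mult_right_mono[OF Cge M] True by simp
    finally show ?thesis by (simp add: r_def)
  next
    case False
    have K: "(1 - r^2) * G \<le> 4 / (1 - 0) * M * (1 - r) powr 0"
      using key_bound[OF hol f0 M bnd _ _ z, of 0] unfolding G_def r_def by auto
    then have K': "(1 - r^2) * G \<le> 4 * M" using r by simp
    have P: "2 powr \<beta> \<le> cmod (1 - z) powr \<beta>"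
      using False pos n2 by (intro powr_mono2') auto
    have "(1 - r^2) * cmod (cg \<beta> f z) = (1 - r^2) * G / cmod (1 - z) powr \<beta>"
      by (simp add: eq)
    also have "\<dots> \<le> 4 * M / 2 powr \<beta>"
      using K' P r2 Gn M by (intro frac_le) auto
    also have "\<dots> = 4 * 2 powr (-\<beta>) * M"
      by (simp add: powr_minus divide_inverse)
    also have "\<dots> \<le> Cst \<beta> * M"
      using Cge2 False M by (intro mult_right_mono) auto
    finally show ?thesis by (simp add: r_def)
  qed
qed


lemma bloch0_facts:
  assumes "f \<in> bloch0 1"
  shows "f holomorphic_on ball 0 1" "f 0 = 0"
    and "\<And>w. w \<in> ball 0 1 \<Longrightarrow> (1 - (cmod w)^2) * cmod (deriv f w) \<le> bloch_norm 1 f"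
    and "0 \<le> bloch_norm 1 f"
proof -
  show h: "f holomorphic_on ball 0 1" "f 0 = 0" using assms by (auto simp: bloch0_def bloch_space_def)
  have bdd: "bdd_above (bloch_set 1 f)" using assms by (auto simp: bloch0_def bloch_space_def)
  show b: "(1 - (cmod w)^2) * cmod (deriv f w) \<le> bloch_norm 1 f" if "w \<in> ball 0 1" for w
  proof -
    have "0 \<le> 1 - (cmod w)^2" using that by (simp add: abs_square_le_1)
    then have pw: "(1 - (cmod w)^2) powr 1 = 1 - (cmod w)^2" by simp
    have "(1 - (cmod w)^2) * cmod (deriv f w) \<in> bloch_set 1 f"
      unfolding bloch_set_def mem_Collect_eq
      by (rule exI[of _ w]) (simp only: pw that simp_thms)
    then show ?thesis unfolding bloch_norm_def by (rule cSup_upper[OF _ bdd])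
  qed
  have "0 \<le> (1 - (cmod (0::complex))^2) * cmod (deriv f 0)" by simp
  also have "\<dots> \<le> bloch_norm 1 f" by (rule b) simp
  finally show "0 \<le> bloch_norm 1 f" .
qed

theorem theorem2p4:
  fixes \<beta> :: real
  assumes "\<beta> < 1"
  shows "(\<forall>f \<in> bloch0 1. cesaro \<beta> f \<in> bloch0 1)
       \<and> (\<forall>f \<in> bloch0 1. \<forall>g \<in> bloch0 1. \<forall>a b :: complex. \<forall>z \<in> ball 0 1.
            cesaro \<beta> (\<lambda>w. a * f w + b * g w) z = a * cesaro \<beta> f z + b * cesaro \<beta> g z)
       \<and> (\<exists>C. \<forall>f \<in> bloch0 1. bloch_norm 1 (cesaro \<beta> f) \<le> C * bloch_norm 1 f)"
proof -
  have main: "cesaro \<beta> f \<in> bloch0 1 \<and> bloch_norm 1 (cesaro \<beta> f) \<le> Cst \<beta> * bloch_norm 1 f"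
    if f: "f \<in> bloch0 1" for f
  proof -
    note F = bloch0_facts[OF f]
    have D: "(cesaro \<beta> f has_field_derivative cg \<beta> f z) (at z)" if "z \<in> ball 0 1" for z
      by (rule cesaro_props(2)[OF F(1,2) that])
    have hol: "cesaro \<beta> f holomorphic_on ball 0 1"
      unfolding holomorphic_on_open[OF open_ball] using D by blast
    have el: "x \<le> Cst \<beta> * bloch_norm 1 f" if "x \<in> bloch_set 1 (cesaro \<beta> f)" for x
    proof -
      obtain z where z: "z \<in> ball 0 1" and x: "x = (1 - (cmod z)^2) powr 1 * cmod (deriv (cesaro \<beta> f) z)"
        using \<open>x \<in> _\<close> unfolding bloch_set_def mem_Collect_eq by auto
      have "0 \<le> 1 - (cmod z)^2" using z by (simp add: abs_square_le_1)
      then have "x = (1 - (cmod z)^2) * cmod (cg \<beta> f z)"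
        using x DERIV_imp_deriv[OF D[OF z]] by simp
      also have "\<dots> \<le> Cst \<beta> * bloch_norm 1 f"
        by (rule cg_bound[OF F(1,2,4,3) assms]) (use z in auto)
      finally show ?thesis .
    qed
    have bdd: "bdd_above (bloch_set 1 (cesaro \<beta> f))"
      by (rule bdd_aboveI[of _ "Cst \<beta> * bloch_norm 1 f"]) (rule el)
    have ne: "bloch_set 1 (cesaro \<beta> f) \<noteq> {}"
    proof -
      have "(1 - (cmod (0::complex))^2) powr 1 * cmod (deriv (cesaro \<beta> f) 0) \<in> bloch_set 1 (cesaro \<beta> f)"
        unfolding bloch_set_def by (rule CollectI, rule exI[of _ 0]) simp
      then show ?thesis by blast
    qed
    have "cesaro \<beta> f \<in> bloch0 1"
      unfolding bloch0_def bloch_space_def using hol bdd cesaro_0[of \<beta> f] by simp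
    moreover have "bloch_norm 1 (cesaro \<beta> f) \<le> Cst \<beta> * bloch_norm 1 f"
      unfolding bloch_norm_def[of 1 "cesaro \<beta> f"] by (rule cSup_least[OF ne el])
    ultimately show ?thesis by blast
  qed
  have lin: "cesaro \<beta> (\<lambda>w. a * f w + b * g w) z = a * cesaro \<beta> f z + b * cesaro \<beta> g z"
    if f: "f \<in> bloch0 1" and g: "g \<in> bloch0 1" and z: "z \<in> ball 0 1" for f g a b z
  proof -
    note F = bloch0_facts[OF f] and G = bloch0_facts[OF g]
    have hc: "((\<lambda>w. a * (f w / (w * (1 - w) powr (complex_of_real \<beta>))) + b * (g w / (w * (1 - w) powr (complex_of_real \<beta>))))
        has_contour_integral a * cesaro \<beta> f z + b * cesaro \<beta> g z) (linepath 0 z)"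
      by (intro has_contour_integral_add has_contour_integral_lmul cesaro_props(1)[OF F(1,2) z] cesaro_props(1)[OF G(1,2) z])
    have eq: "(\<lambda>w. a * (f w / (w * (1 - w) powr (complex_of_real \<beta>))) + b * (g w / (w * (1 - w) powr (complex_of_real \<beta>))))
       = (\<lambda>w. (a * f w + b * g w) / (w * (1 - w) powr (complex_of_real \<beta>)))"
      by (intro ext) (simp add: add_divide_distrib)
    have "((\<lambda>w. (a * f w + b * g w) / (w * (1 - w) powr (complex_of_real \<beta>)))
        has_contour_integral a * cesaro \<beta> f z + b * cesaro \<beta> g z) (linepath 0 z)"
      using hc unfolding eq .
    from contour_integral_unique[OF this] show ?thesis unfolding cesaro_def .
  qed
  show ?thesis using main lin by blast
qed

end
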